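(* Let $n\in\mathbb N$. The canonical $n$-tensors $L^n_\Omega$, restricted to $\mathcal P^{1/n}(\Omega)$ and to $\mathcal M^{1/n}(\Omega)$ respectively, form congruent families of $n$-tensors (of regularity $1/n$). Likewise, for every $0<r\le 1/n$, the canonical $n$-tensors $\tau^n_{\Omega;r}$ on $\mathcal P^r(\Omega)$ and on $\mathcal M^r(\Omega)$ respectively form congruent families of $n$-tensors of regularity $r$.
   Context: For a measurable space $\Omega$: $\mathcal S(\Omega)$ finite signed measures, $\mathcal M(\Omega)$ finite measures, $\mathcal P(\Omega)$ probability measures. For $r\in(0,1]$, $\mathcal S^r(\Omega)$ is the Banach lattice of $r$-th powers of finite signed measures, whose elements are $\phi\mu^r$ with $\mu\in\mathcal M(\Omega)$, $\phi\in L^{1/r}(\Omega,\mu)$ (with $\phi\mu^r=\psi\nu^r$ iff $\phi(d\mu/d\rho)^r=\psi(d\nu/d\rho)^r$ $\rho$-a.e. for a dominating $\rho$). $\mathcal M^r(\Omega)=\{\mu^r:\mu\in\mathcal M(\Omega)\}$, $\mathcal P^r(\Omega)=\{\mu^r:\mu\in\mathcal P(\Omega)\}$, with tangent spaces $T_{\mu^r}\mathcal M^r(\Omega)=\{\phi\mu^r:\phi\in L^{1/r}(\Omega,\mu)\}$ and $T_{\mu^r}\mathcal P^r(\Omega)=\{\phi\mu^r:\int\phi\,d\mu=0\}$. The canonical tensor $\tau^n_{\Omega;r}$ ($0<r\le1/n$) is $(\tau^n_{\Omega;r})_{\mu^r}(\phi_1\mu^r,\dots,\phi_n\mu^r)=r^{-n}\int_\Omega\phi_1\cdots\phi_n\,d\mu$,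 and $L^n_\Omega:=\tau^n_{\Omega;1/n}$, i.e. $L^n_\Omega(\phi_1\mu^{1/n},\dots,\phi_n\mu^{1/n})=n^n\int\phi_1\cdots\phi_n\,d\mu$. A Markov kernel $K:\Omega\to\mathcal P(\Omega')$ induces $K_*\mu(A')=\int K(\omega)(A')d\mu(\omega)$; it is congruent if there is a measurable $\kappa:\Omega'\to\Omega$ with $\kappa_*K(\omega)=\delta_\omega$ for all $\omega$. The formal derivative of $K_r(\mu^r)=(K_*\mu)^r$ at $\mu^r$ is $d_{\mu^r}K_r(\phi\mu^r)=\frac{d\{K_*(\phi\mu)\}}{d\mu'}\mu'^r$, $\mu'=K_*\mu$, and $(K_r^*\Psi)_{\mu^r}(V_1,\dots,V_n)=\Psi_{(K_*\mu)^r}(d_{\mu^r}K_rV_1,\dots,d_{\mu^r}K_rV_n)$. A family $(\Theta_\Omega)$ of $n$-tensor fields on $\mathcal M^r(\Omega)$ (or $\mathcal P^r(\Omega)$), one for each measurable space, is a congruent family of regularity $r$ if $K_r^*\Theta_{\Omega'}=\Theta_\Omega$ for every congruent Markov kernel $K:\Omega\to\mathcal P(\Omega')$. *)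

theory Defs
  imports "HOL-Probability.Probability"
begin

definition congruent_kernel :: "'a measure \<Rightarrow> 'b measure \<Rightarrow> ('a \<Rightarrow> 'b measure) \<Rightarrow> bool" where
  "congruent_kernel \<Omega> \<Omega>' K \<longleftrightarrow>
     K \<in> measurable \<Omega> (prob_algebra \<Omega>') \<and>
     (\<exists>\<kappa> \<in> measurable \<Omega>' \<Omega>. \<forall>\<omega>\<in>space \<Omega>. distr (K \<omega>) \<Omega> \<kappa> = return \<Omega> \<omega>)"

definition kernel_push :: "('a \<Rightarrow> 'b measure) \<Rightarrow> 'b measure \<Rightarrow> 'a measure \<Rightarrow> 'b measure" where
  "kernel_push K \<Omega>' \<mu> = measure_of (space \<Omega>') (sets \<Omega>') (\<lambda>A. \<integral>\<^sup>+\<omega>. emeasure (K \<omega>) A \<partial>\<mu>)"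

text \<open>psi is (a version of) the Radon-Nikodym derivative d K_*(phi mu) / d mu',
  mu' = K_* mu, where K_*(phi mu)(A') = integral of K(w)(A') phi(w) d mu(w) (a signed measure).\<close>
definition push_density ::
  "('a \<Rightarrow> 'b measure) \<Rightarrow> 'b measure \<Rightarrow> 'a measure \<Rightarrow> ('a \<Rightarrow> real) \<Rightarrow> ('b \<Rightarrow> real) \<Rightarrow> bool" where
  "push_density K \<Omega>' \<mu> \<phi> \<psi> \<longleftrightarrow>
     \<psi> \<in> borel_measurable \<Omega>' \<and> integrable (kernel_push K \<Omega>' \<mu>) \<psi> \<and>
     (\<forall>A\<in>sets \<Omega>'. (LINT x:A|kernel_push K \<Omega>' \<mu>. \<psi> x) = (\<integral>\<omega>. measure (K \<omega>) A * \<phi> \<omega> \<partial>\<mu>))"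

definition Lr :: "real \<Rightarrow> 'a measure \<Rightarrow> ('a \<Rightarrow> real) \<Rightarrow> bool" where
  "Lr r \<mu> \<phi> \<longleftrightarrow> \<phi> \<in> borel_measurable \<mu> \<and> integrable \<mu> (\<lambda>x. \<bar>\<phi> x\<bar> powr (1 / r))"

text \<open>Canonical tensor tau^n_{Omega;r} at mu^r on (phi_1 mu^r, ..., phi_n mu^r)
  (vectors indexed 0..n-1): r^{-n} * integral of phi_1 ... phi_n d mu.\<close>
definition canon_tensor :: "nat \<Rightarrow> real \<Rightarrow> 'a measure \<Rightarrow> (nat \<Rightarrow> 'a \<Rightarrow> real) \<Rightarrow> real" where
  "canon_tensor n r \<mu> \<phi> = (1 / r) ^ n * (\<integral>x. (\<Prod>i<n. \<phi> i x) \<partial>\<mu>)"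

text \<open>(K_r^* tau_{Omega'})_{mu^r}(V_1..V_n) = (tau_Omega)_{mu^r}(V_1..V_n), where
  d K_r (phi_i mu^r) = psi_i mu'^r with psi_i = d K_*(phi_i mu)/d mu' (any version).\<close>
definition pullback_identity ::
  "nat \<Rightarrow> real \<Rightarrow> 'b measure \<Rightarrow> ('a \<Rightarrow> 'b measure) \<Rightarrow> 'a measure \<Rightarrow> (nat \<Rightarrow> 'a \<Rightarrow> real) \<Rightarrow> bool" where
  "pullback_identity n r \<Omega>' K \<mu> \<phi> \<longleftrightarrow>
     (\<forall>\<psi>. (\<forall>i<n. push_density K \<Omega>' \<mu> (\<phi> i) (\<psi> i)) \<longrightarrow>
        canon_tensor n r (kernel_push K \<Omega>' \<mu>) \<psi> = canon_tensor n r \<mu> \<phi>)"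

definition invariant_M :: "nat \<Rightarrow> real \<Rightarrow> 'a measure \<Rightarrow> 'b measure \<Rightarrow> ('a \<Rightarrow> 'b measure) \<Rightarrow> bool" where
  "invariant_M n r \<Omega> \<Omega>' K \<longleftrightarrow>
     (\<forall>\<mu> \<phi>. finite_measure \<mu> \<and> sets \<mu> = sets \<Omega> \<and> (\<forall>i<n. Lr r \<mu> (\<phi> i))
        \<longrightarrow> pullback_identity n r \<Omega>' K \<mu> \<phi>)"

definition invariant_P :: "nat \<Rightarrow> real \<Rightarrow> 'a measure \<Rightarrow> 'b measure \<Rightarrow> ('a \<Rightarrow> 'b measure) \<Rightarrow> bool" where
  "invariant_P n r \<Omega> \<Omega>' K \<longleftrightarrow>
     (\<forall>\<mu> \<phi>. prob_space \<mu> \<and> sets \<mu> = sets \<Omega> \<and>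
        (\<forall>i<n. Lr r \<mu> (\<phi> i) \<and> (\<integral>x. \<phi> i x \<partial>\<mu>) = 0)
        \<longrightarrow> pullback_identity n r \<Omega>' K \<mu> \<phi>)"

end

theory Submission
  imports Defs
begin

locale ck =
  fixes \<Omega> :: "'a measure" and \<Omega>' :: "'b measure" and K :: "'a \<Rightarrow> 'b measure"
    and \<kappa> :: "'b \<Rightarrow> 'a" and \<mu> :: "'a measure"
  assumes K: "K \<in> \<Omega> \<rightarrow>\<^sub>M prob_algebra \<Omega>'"
    and kappa: "\<kappa> \<in> \<Omega>' \<rightarrow>\<^sub>M \<Omega>"
    and ret: "\<And>\<omega>. \<omega> \<in> space \<Omega> \<Longrightarrow> distr (K \<omega>) \<Omega> \<kappa> = return \<Omega> \<omega>"
    and fin: "finite_measure \<mu>"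
    and sets_mu: "sets \<mu> = sets \<Omega>"
    and ne: "space \<mu> \<noteq> {}"
begin

lemma space_mu: "space \<mu> = space \<Omega>"
  using sets_mu by (rule sets_eq_imp_space_eq)

lemma Kmu: "K \<in> \<mu> \<rightarrow>\<^sub>M prob_algebra \<Omega>'"
  using K measurable_cong_sets[OF sets_mu refl] by blast

lemma Kmu_sub: "K \<in> \<mu> \<rightarrow>\<^sub>M subprob_algebra \<Omega>'"
  using Kmu by (rule measurable_prob_algebraD)

lemma sets_K: "\<omega> \<in> space \<Omega> \<Longrightarrow> sets (K \<omega>) = sets \<Omega>'"
  using measurable_space[OF K] by (auto simp: space_prob_algebra)

lemma space_K: "\<omega> \<in> space \<Omega> \<Longrightarrow> space (K \<omega>) = space \<Omega>'"
  using sets_K by (rule sets_eq_imp_space_eq)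

lemma prob_K: "\<omega> \<in> space \<Omega> \<Longrightarrow> prob_space (K \<omega>)"
  using measurable_space[OF K] by (auto simp: space_prob_algebra)

abbreviation "\<mu>' \<equiv> kernel_push K \<Omega>' \<mu>"

lemma kp_bind: "\<mu>' = \<mu> \<bind> K"
proof -
  have sb: "sets (\<mu> \<bind> K) = sets \<Omega>'"
    using sets_K ne space_mu by (intro sets_bind) auto
  have spb: "space (\<mu> \<bind> K) = space \<Omega>'"
    using sb by (rule sets_eq_imp_space_eq)
  have "\<mu>' = measure_of (space \<Omega>') (sets \<Omega>') (emeasure (\<mu> \<bind> K))"
    unfolding kernel_push_def
  proof (rule measure_of_eq)
    show "sets \<Omega>' \<subseteq> Pow (space \<Omega>')" by (rule sets.space_closed)
    fix a assume "a \<in> sigma_sets (space \<Omega>') (sets \<Omega>')"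
    then have "a \<in> sets \<Omega>'" using sets.sigma_sets_eq[of \<Omega>'] by simp
    then show "(\<integral>\<^sup>+\<omega>. emeasure (K \<omega>) a \<partial>\<mu>) = emeasure (\<mu> \<bind> K) a"
      using emeasure_bind[OF ne Kmu_sub] by simp
  qed
  also have "\<dots> = \<mu> \<bind> K"
    using measure_of_of_measure[of "\<mu> \<bind> K"] sb spb by simp
  finally show ?thesis .
qed

lemma sets_mu': "sets \<mu>' = sets \<Omega>'"
  unfolding kp_bind using sets_K ne space_mu by (intro sets_bind) auto

lemma space_mu': "space \<mu>' = space \<Omega>'"
  using sets_mu' by (rule sets_eq_imp_space_eq)

lemma kappa_mu': "\<kappa> \<in> \<mu>' \<rightarrow>\<^sub>M \<Omega>"
  using kappa measurable_cong_sets[OF sets_mu' refl] by blast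

lemma K_pre: assumes "\<omega> \<in> space \<Omega>" "B \<in> sets \<Omega>"
  shows "emeasure (K \<omega>) (\<kappa> -` B \<inter> space \<Omega>') = indicator B \<omega>"
proof -
  have km: "\<kappa> \<in> K \<omega> \<rightarrow>\<^sub>M \<Omega>"
    using kappa measurable_cong_sets[OF sets_K[OF assms(1)] refl] by blast
  have "emeasure (distr (K \<omega>) \<Omega> \<kappa>) B = emeasure (K \<omega>) (\<kappa> -` B \<inter> space \<Omega>')"
    using emeasure_distr[OF km assms(2)] space_K[OF assms(1)] by simp
  then show ?thesis using ret[OF assms(1)] assms(2) by simp
qed

lemma AE_K: fixes f :: "'a \<Rightarrow> real" assumes f[measurable]: "f \<in> borel_measurable \<Omega>" and w: "\<omega> \<in> space \<Omega>"
  shows "AE y in K \<omega>. f (\<kappa> y) = f \<omega>"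
proof (rule AE_I')
  let ?B = "{x \<in> space \<Omega>. f x \<noteq> f \<omega>}"
  have B: "?B \<in> sets \<Omega>" by measurable
  show "\<kappa> -` ?B \<inter> space \<Omega>' \<in> null_sets (K \<omega>)"
    using K_pre[OF w B] B w measurable_sets[OF kappa B] sets_K[OF w]
    by (auto simp: null_sets_def)
  show "{y \<in> space (K \<omega>). f (\<kappa> y) \<noteq> f \<omega>} \<subseteq> \<kappa> -` ?B \<inter> space \<Omega>'"
    using space_K[OF w] measurable_space[OF kappa] by auto
qed

lemma distr_mu': "distr \<mu>' \<Omega> \<kappa> = \<mu>"
proof (rule measure_eqI)
  show "sets (distr \<mu>' \<Omega> \<kappa>) = sets \<mu>" using sets_mu by simp
  fix B assume "B \<in> sets (distr \<mu>' \<Omega> \<kappa>)"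
  then have B: "B \<in> sets \<Omega>" by simp
  have "emeasure (distr \<mu>' \<Omega> \<kappa>) B = emeasure \<mu>' (\<kappa> -` B \<inter> space \<Omega>')"
    using emeasure_distr[OF kappa_mu' B] space_mu' by simp
  also have "\<dots> = (\<integral>\<^sup>+\<omega>. emeasure (K \<omega>) (\<kappa> -` B \<inter> space \<Omega>') \<partial>\<mu>)"
    unfolding kp_bind using emeasure_bind[OF ne Kmu_sub] measurable_sets[OF kappa B] by simp
  also have "\<dots> = (\<integral>\<^sup>+\<omega>. indicator B \<omega> \<partial>\<mu>)"
    by (rule nn_integral_cong) (simp add: K_pre B space_mu)
  also have "\<dots> = emeasure \<mu> B" using B sets_mu by simp
  finally show "emeasure (distr \<mu>' \<Omega> \<kappa>) B = emeasure \<mu> B" .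
qed

lemma meas_K_A: "A \<in> sets \<Omega>' \<Longrightarrow> (\<lambda>\<omega>. measure (K \<omega>) A) \<in> borel_measurable \<mu>"
  using measurable_compose[OF Kmu measurable_measure_prob_algebra] by blast

lemma E0:
  fixes \<phi> :: "'a \<Rightarrow> real"
  assumes phi[measurable]: "\<phi> \<in> borel_measurable \<Omega>" and nn: "\<And>x. 0 \<le> \<phi> x"
    and A[measurable]: "A \<in> sets \<Omega>'"
  shows "(\<integral>y. indicator A y * \<phi> (\<kappa> y) \<partial>\<mu>') = (\<integral>\<omega>. measure (K \<omega>) A * \<phi> \<omega> \<partial>\<mu>)"
proof -
  have km[measurable]: "\<kappa> \<in> \<mu>' \<rightarrow>\<^sub>M \<Omega>" by (rule kappa_mu')
  have Am: "A \<in> sets \<mu>'" using A sets_mu' by simp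
  have f1: "(\<lambda>y. indicator A y * \<phi> (\<kappa> y)) \<in> borel_measurable \<mu>'"
    using Am by measurable
  have f2: "(\<lambda>y. ennreal (indicator A y * \<phi> (\<kappa> y))) \<in> borel_measurable \<Omega>'"
    using kappa by measurable
  have g1: "(\<lambda>\<omega>. measure (K \<omega>) A * \<phi> \<omega>) \<in> borel_measurable \<mu>"
    using meas_K_A[OF A] measurable_cong_sets[OF sets_mu refl, of borel] phi
    by (intro borel_measurable_times) auto
  have "(\<integral>y. indicator A y * \<phi> (\<kappa> y) \<partial>\<mu>') = enn2real (\<integral>\<^sup>+y. ennreal (indicator A y * \<phi> (\<kappa> y)) \<partial>\<mu>')"
    using f1 nn by (intro integral_eq_nn_integral) auto
  also have "(\<integral>\<^sup>+y. ennreal (indicator A y * \<phi> (\<kappa> y)) \<partial>\<mu>')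
      = (\<integral>\<^sup>+\<omega>. \<integral>\<^sup>+y. ennreal (indicator A y * \<phi> (\<kappa> y)) \<partial>K \<omega> \<partial>\<mu>)"
    unfolding kp_bind by (rule nn_integral_bind[OF f2 Kmu_sub])
  also have "\<dots> = (\<integral>\<^sup>+\<omega>. ennreal (measure (K \<omega>) A * \<phi> \<omega>) \<partial>\<mu>)"
  proof (rule nn_integral_cong)
    fix \<omega> assume "\<omega> \<in> space \<mu>"
    then have w: "\<omega> \<in> space \<Omega>" using space_mu by simp
    interpret P: prob_space "K \<omega>" using prob_K[OF w] .
    have "(\<integral>\<^sup>+y. ennreal (indicator A y * \<phi> (\<kappa> y)) \<partial>K \<omega>)
        = (\<integral>\<^sup>+y. ennreal (\<phi> \<omega>) * indicator A y \<partial>K \<omega>)"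
      by (rule nn_integral_cong_AE) (use AE_K[OF phi w] in \<open>auto split: split_indicator\<close>)
    also have "\<dots> = ennreal (\<phi> \<omega>) * emeasure (K \<omega>) A"
      using A sets_K[OF w] by (intro nn_integral_cmult_indicator) auto
    also have "\<dots> = ennreal (measure (K \<omega>) A * \<phi> \<omega>)"
      by (simp add: P.emeasure_eq_measure ennreal_mult nn mult.commute)
    finally show "(\<integral>\<^sup>+y. ennreal (indicator A y * \<phi> (\<kappa> y)) \<partial>K \<omega>) = ennreal (measure (K \<omega>) A * \<phi> \<omega>)" .
  qed
  also have "enn2real \<dots> = (\<integral>\<omega>. measure (K \<omega>) A * \<phi> \<omega> \<partial>\<mu>)"
    using g1 nn by (intro integral_eq_nn_integral[symmetric]) auto
  finally show ?thesis .
qed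

lemma int_comp:
  fixes \<phi> :: "'a \<Rightarrow> real"
  assumes phi: "\<phi> \<in> borel_measurable \<Omega>" and int: "integrable \<mu> \<phi>"
  shows "integrable \<mu>' (\<lambda>y. \<phi> (\<kappa> y))"
  using integrable_distr_eq[OF kappa_mu' phi] int distr_mu' by simp

lemma E:
  fixes \<phi> :: "'a \<Rightarrow> real"
  assumes phi[measurable]: "\<phi> \<in> borel_measurable \<Omega>" and int: "integrable \<mu> \<phi>"
    and A[measurable]: "A \<in> sets \<Omega>'"
  shows "(\<integral>y. indicator A y * \<phi> (\<kappa> y) \<partial>\<mu>') = (\<integral>\<omega>. measure (K \<omega>) A * \<phi> \<omega> \<partial>\<mu>)"
proof -
  define p where "p = (\<lambda>x. max (\<phi> x) 0)"
  define q where "q = (\<lambda>x. max (- \<phi> x) 0)"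
  have pm[measurable]: "p \<in> borel_measurable \<Omega>" unfolding p_def by measurable
  have qm[measurable]: "q \<in> borel_measurable \<Omega>" unfolding q_def by measurable
  have pq: "\<And>x. \<phi> x = p x - q x" unfolding p_def q_def by auto
  have ip: "integrable \<mu> p" unfolding p_def using int by (intro integrable_max) auto
  have iq: "integrable \<mu> q" unfolding q_def using int by (intro integrable_max) auto
  have km[measurable]: "\<kappa> \<in> \<mu>' \<rightarrow>\<^sub>M \<Omega>" by (rule kappa_mu')
  have Am: "A \<in> sets \<mu>'" using A sets_mu' by simp
  have ipc: "integrable \<mu>' (\<lambda>y. indicator A y * p (\<kappa> y))"
    using integrable_mult_indicator[OF Am int_comp[OF pm ip]] by simp
  have iqc: "integrable \<mu>' (\<lambda>y. indicator A y * q (\<kappa> y))"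
    using integrable_mult_indicator[OF Am int_comp[OF qm iq]] by simp
  have mK: "(\<lambda>\<omega>. measure (K \<omega>) A) \<in> borel_measurable \<mu>" by (rule meas_K_A[OF A])
  have pmu: "p \<in> borel_measurable \<mu>" using pm measurable_cong_sets[OF sets_mu refl] by blast
  have qmu: "q \<in> borel_measurable \<mu>" using qm measurable_cong_sets[OF sets_mu refl] by blast
  have bnd: "\<And>\<omega>. \<omega> \<in> space \<mu> \<Longrightarrow> measure (K \<omega>) A \<le> 1"
    using prob_K space_mu prob_space.prob_le_1 by auto
  have ipK: "integrable \<mu> (\<lambda>\<omega>. measure (K \<omega>) A * p \<omega>)"
  proof (rule Bochner_Integration.integrable_bound[OF ip])
    show "(\<lambda>\<omega>. measure (K \<omega>) A * p \<omega>) \<in> borel_measurable \<mu>" using mK pmu by measurable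
    show "AE x in \<mu>. norm (measure (K x) A * p x) \<le> norm (p x)"
      using bnd by (auto simp: p_def abs_mult intro!: mult_left_le_one_le AE_I2)
  qed
  have iqK: "integrable \<mu> (\<lambda>\<omega>. measure (K \<omega>) A * q \<omega>)"
  proof (rule Bochner_Integration.integrable_bound[OF iq])
    show "(\<lambda>\<omega>. measure (K \<omega>) A * q \<omega>) \<in> borel_measurable \<mu>" using mK qmu by measurable
    show "AE x in \<mu>. norm (measure (K x) A * q x) \<le> norm (q x)"
      using bnd by (auto simp: q_def abs_mult intro!: mult_left_le_one_le AE_I2)
  qed
  have "(\<integral>y. indicator A y * \<phi> (\<kappa> y) \<partial>\<mu>') = (\<integral>y. indicator A y * p (\<kappa> y) - indicator A y * q (\<kappa> y) \<partial>\<mu>')"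
    by (simp add: pq right_diff_distrib)
  also have "\<dots> = (\<integral>y. indicator A y * p (\<kappa> y) \<partial>\<mu>') - (\<integral>y. indicator A y * q (\<kappa> y) \<partial>\<mu>')"
    using ipc iqc by (rule Bochner_Integration.integral_diff)
  also have "\<dots> = (\<integral>\<omega>. measure (K \<omega>) A * p \<omega> \<partial>\<mu>) - (\<integral>\<omega>. measure (K \<omega>) A * q \<omega> \<partial>\<mu>)"
    using E0[OF pm _ A] E0[OF qm _ A] by (simp add: p_def q_def)
  also have "\<dots> = (\<integral>\<omega>. measure (K \<omega>) A * p \<omega> - measure (K \<omega>) A * q \<omega> \<partial>\<mu>)"
    using ipK iqK by (rule Bochner_Integration.integral_diff[symmetric])
  also have "\<dots> = (\<integral>\<omega>. measure (K \<omega>) A * \<phi> \<omega> \<partial>\<mu>)"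
    by (simp add: pq right_diff_distrib)
  finally show ?thesis .
qed

lemma F:
  fixes \<phi> :: "'a \<Rightarrow> real"
  assumes phi[measurable]: "\<phi> \<in> borel_measurable \<Omega>" and int: "integrable \<mu> \<phi>"
    and pd: "push_density K \<Omega>' \<mu> \<phi> \<psi>"
  shows "AE y in \<mu>'. \<psi> y = \<phi> (\<kappa> y)"
proof (rule density_unique_real)
  show "integrable \<mu>' \<psi>" using pd unfolding push_density_def by simp
  show "integrable \<mu>' (\<lambda>y. \<phi> (\<kappa> y))" by (rule int_comp[OF phi int])
  fix A assume "A \<in> sets \<mu>'"
  then have A: "A \<in> sets \<Omega>'" using sets_mu' by simp
  have "(LINT y:A|\<mu>'. \<psi> y) = (\<integral>\<omega>. measure (K \<omega>) A * \<phi> \<omega> \<partial>\<mu>)"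
    using pd A unfolding push_density_def by blast
  also have "\<dots> = (\<integral>y. indicator A y * \<phi> (\<kappa> y) \<partial>\<mu>')" by (rule E[OF phi int A, symmetric])
  also have "\<dots> = (LINT y:A|\<mu>'. \<phi> (\<kappa> y))" by (simp add: set_lebesgue_integral_def)
  finally show "(LINT y:A|\<mu>'. \<psi> y) = (LINT y:A|\<mu>'. \<phi> (\<kappa> y))" .
qed

lemma main:
  fixes \<phi> :: "nat \<Rightarrow> 'a \<Rightarrow> real"
  assumes phi: "\<And>i. i < n \<Longrightarrow> \<phi> i \<in> borel_measurable \<Omega>"
    and int: "\<And>i. i < n \<Longrightarrow> integrable \<mu> (\<phi> i)"
    and pd: "\<And>i. i < n \<Longrightarrow> push_density K \<Omega>' \<mu> (\<phi> i) (\<psi> i)"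
  shows "canon_tensor n r \<mu>' \<psi> = canon_tensor n r \<mu> \<phi>"
proof -
  have AE: "AE y in \<mu>'. \<forall>i\<in>{..<n}. \<psi> i y = \<phi> i (\<kappa> y)"
    by (rule AE_finite_allI) (use F[OF phi int pd] in auto)
  have "(\<integral>y. (\<Prod>i<n. \<psi> i y) \<partial>\<mu>') = (\<integral>y. (\<Prod>i<n. \<phi> i (\<kappa> y)) \<partial>\<mu>')"
  proof (rule integral_cong_AE)
    show "(\<lambda>y. \<Prod>i<n. \<psi> i y) \<in> borel_measurable \<mu>'"
      using pd sets_mu' measurable_cong_sets[OF sets_mu' refl]
      by (intro borel_measurable_prod) (auto simp: push_density_def)
    show "(\<lambda>y. \<Prod>i<n. \<phi> i (\<kappa> y)) \<in> borel_measurable \<mu>'"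
      using phi kappa_mu' by (intro borel_measurable_prod) (auto intro: measurable_compose)
    show "AE y in \<mu>'. (\<Prod>i<n. \<psi> i y) = (\<Prod>i<n. \<phi> i (\<kappa> y))"
      using AE by eventually_elim (auto intro: prod.cong)
  qed
  also have "\<dots> = (\<integral>x. (\<Prod>i<n. \<phi> i x) \<partial>distr \<mu>' \<Omega> \<kappa>)"
    using phi by (intro integral_distr[symmetric] kappa_mu' borel_measurable_prod) auto
  also have "\<dots> = (\<integral>x. (\<Prod>i<n. \<phi> i x) \<partial>\<mu>)" by (simp add: distr_mu')
  finally show ?thesis unfolding canon_tensor_def by simp
qed

end

lemma Lr_integrable:
  fixes \<phi> :: "'a \<Rightarrow> real"
  assumes "finite_measure \<mu>" "Lr r \<mu> \<phi>" "0 < r" "r \<le> 1"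
  shows "integrable \<mu> \<phi>"
proof -
  interpret finite_measure \<mu> by fact
  have m: "\<phi> \<in> borel_measurable \<mu>" and i: "integrable \<mu> (\<lambda>x. \<bar>\<phi> x\<bar> powr (1 / r))"
    using assms(2) unfolding Lr_def by auto
  have p: "1 \<le> 1 / r" using assms by (simp add: field_simps)
  show ?thesis
  proof (rule Bochner_Integration.integrable_bound)
    show "integrable \<mu> (\<lambda>x. 1 + \<bar>\<phi> x\<bar> powr (1 / r))"
      using i by (intro Bochner_Integration.integrable_add) auto
    show "\<phi> \<in> borel_measurable \<mu>" by fact
    show "AE x in \<mu>. norm (\<phi> x) \<le> norm (1 + \<bar>\<phi> x\<bar> powr (1 / r))"
    proof (rule AE_I2)
      fix x
      have "\<bar>\<phi> x\<bar> \<le> 1 + \<bar>\<phi> x\<bar> powr (1 / r)"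
      proof (cases "\<bar>\<phi> x\<bar> \<le> 1")
        case True then show ?thesis by (smt (verit) powr_ge_zero)
      next
        case False
        then have "\<bar>\<phi> x\<bar> powr 1 \<le> \<bar>\<phi> x\<bar> powr (1 / r)" using p by (intro powr_mono) auto
        then show ?thesis using False by (smt (verit) powr_one_gt_zero_iff)
      qed
      then show "norm (\<phi> x) \<le> norm (1 + \<bar>\<phi> x\<bar> powr (1 / r))" by simp
    qed
  qed
qed

lemma inv_M:
  assumes ck: "congruent_kernel \<Omega> \<Omega>' K" and r: "0 < r" "r \<le> 1"
  shows "invariant_M n r \<Omega> \<Omega>' K"
  unfolding invariant_M_def pullback_identity_def
proof (intro allI impI)
  fix \<mu> :: "'a measure" and \<phi> :: "nat \<Rightarrow> 'a \<Rightarrow> real" and \<psi> :: "nat \<Rightarrow> 'b \<Rightarrow> real"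
  assume A: "finite_measure \<mu> \<and> sets \<mu> = sets \<Omega> \<and> (\<forall>i<n. Lr r \<mu> (\<phi> i))"
    and pd: "\<forall>i<n. push_density K \<Omega>' \<mu> (\<phi> i) (\<psi> i)"
  obtain \<kappa> where Km: "K \<in> \<Omega> \<rightarrow>\<^sub>M prob_algebra \<Omega>'" and km: "\<kappa> \<in> \<Omega>' \<rightarrow>\<^sub>M \<Omega>"
    and ret: "\<forall>\<omega>\<in>space \<Omega>. distr (K \<omega>) \<Omega> \<kappa> = return \<Omega> \<omega>"
    using ck unfolding congruent_kernel_def by blast
  show "canon_tensor n r (kernel_push K \<Omega>' \<mu>) \<psi> = canon_tensor n r \<mu> \<phi>"
  proof (cases "space \<mu> = {}")
    case True
    have "kernel_push K \<Omega>' \<mu> = null_measure \<Omega>'"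
      unfolding kernel_push_def null_measure_def using True by (simp add: nn_integral_empty)
    moreover have "(\<integral>x. f x \<partial>null_measure \<Omega>') = 0" for f :: "'b \<Rightarrow> real"
    proof (rule integral_eq_zero_AE, rule AE_I')
      show "space (null_measure \<Omega>') \<in> null_sets (null_measure \<Omega>')" by (simp add: null_sets_def)
    qed auto
    ultimately show ?thesis unfolding canon_tensor_def by (simp only: Bochner_Integration.integral_empty[OF True])
  next
    case False
    interpret ck \<Omega> \<Omega>' K \<kappa> \<mu>
      using Km km ret A False unfolding ck_def by blast
    show ?thesis
    proof (rule main)
      fix i assume i: "i < n"
      then have L: "Lr r \<mu> (\<phi> i)" using A by blast
      show "\<phi> i \<in> borel_measurable \<Omega>"
        using L measurable_cong_sets[OF sets_mu refl] unfolding Lr_def by blast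
      show "integrable \<mu> (\<phi> i)" using Lr_integrable[OF fin L r] .
      show "push_density K \<Omega>' \<mu> (\<phi> i) (\<psi> i)" using pd i by blast
    qed
  qed
qed

lemma inv_P:
  assumes ck: "congruent_kernel \<Omega> \<Omega>' K" and r: "0 < r" "r \<le> 1"
  shows "invariant_P n r \<Omega> \<Omega>' K"
  using inv_M[OF assms, of n] unfolding invariant_P_def invariant_M_def
  by (auto intro: prob_space.finite_measure)

theorem proposition3p6:
  fixes n :: nat and \<Omega> :: "'a measure" and \<Omega>' :: "'b measure" and K :: "'a \<Rightarrow> 'b measure"
  assumes "n \<ge> 1"
    and "congruent_kernel \<Omega> \<Omega>' K"
  shows "invariant_P n (1 / real n) \<Omega> \<Omega>' K \<and> invariant_M n (1 / real n) \<Omega> \<Omega>' K \<and>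
         (\<forall>r. 0 < r \<and> r \<le> 1 / real n \<longrightarrow> invariant_P n r \<Omega> \<Omega>' K \<and> invariant_M n r \<Omega> \<Omega>' K)"
proof -
  have n1: "1 / real n \<le> 1" "0 < 1 / real n" using assms(1) by auto
  show ?thesis using inv_P[OF assms(2)] inv_M[OF assms(2)] n1 by (smt (verit))
qed

end
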